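(* Let $T\subseteq 2^{<\omega}$ be a tree of positive measure $p$ and let $q<1$ be a positive rational. Then there exist a tree $S\subseteq 2^{<\omega}$ of measure at least $q$ and a Turing functional $\Phi$ such that $\Phi(A)$ is an infinite path through $T$ for every infinite path $A$ through $S$.
   Context: The measure of a tree $T\subseteq 2^{<\omega}$ is the Lebesgue (uniform, fair-coin) measure of the set of its infinite paths in $2^\omega$. *)

theory Defs
  imports "HOL-Probability.Probability" "HOL-Library.Sublist" "HOL-Library.Nat_Bijection"
begin

definition init_seg :: "(nat \<Rightarrow> bool) \<Rightarrow> nat \<Rightarrow> bool list" where
  "init_seg A n = map A [0..<n]"

definition prefix_of :: "bool list \<Rightarrow> (nat \<Rightarrow> bool) \<Rightarrow> bool" where
  "prefix_of \<sigma> A \<longleftrightarrow> \<sigma> = init_seg A (length \<sigma>)"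

definition is_tree :: "bool list set \<Rightarrow> bool" where
  "is_tree T \<longleftrightarrow> (\<forall>\<sigma> \<tau>. \<sigma> \<in> T \<and> prefix \<tau> \<sigma> \<longrightarrow> \<tau> \<in> T)"

definition paths :: "bool list set \<Rightarrow> (nat \<Rightarrow> bool) set" where
  "paths T = {A. \<forall>n. init_seg A n \<in> T}"

definition coin_space :: "(nat \<Rightarrow> bool) measure" where
  "coin_space = PiM (UNIV :: nat set) (\<lambda>_. measure_pmf (bernoulli_pmf (1/2)))"

definition tree_measure :: "bool list set \<Rightarrow> real" where
  "tree_measure T = measure coin_space (paths T)"

datatype recf = Z | Sc | Proj nat | Comp recf "recf list" | Prim recf recf | Mn recf

inductive eval :: "recf \<Rightarrow> nat list \<Rightarrow> nat \<Rightarrow> bool" where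
  eval_Z: "eval Z xs 0"
| eval_Sc: "eval Sc (x # xs) (Suc x)"
| eval_Proj: "i < length xs \<Longrightarrow> eval (Proj i) xs (xs ! i)"
| eval_Comp: "list_all2 (\<lambda>f y. eval f xs y) fs ys \<Longrightarrow> eval g ys z \<Longrightarrow> eval (Comp g fs) xs z"
| eval_Prim0: "eval f xs y \<Longrightarrow> eval (Prim f g) (0 # xs) y"
| eval_PrimS: "eval (Prim f g) (n # xs) y \<Longrightarrow> eval g (y # n # xs) z \<Longrightarrow> eval (Prim f g) (Suc n # xs) z"
| eval_Mn: "eval f (n # xs) 0 \<Longrightarrow> (\<forall>m<n. \<exists>k. eval f (m # xs) (Suc k)) \<Longrightarrow> eval (Mn f) xs n"

definition ce :: "nat set \<Rightarrow> bool" where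
  "ce W \<longleftrightarrow> (\<exists>f. \<forall>x. x \<in> W \<longleftrightarrow> (\<exists>y. eval f [x] y))"

definition code_str :: "bool list \<Rightarrow> nat" where
  "code_str \<sigma> = list_encode (map of_bool \<sigma>)"

definition code_pair :: "bool list \<times> bool list \<Rightarrow> nat" where
  "code_pair p = prod_encode (code_str (fst p), code_str (snd p))"

definition compatible :: "bool list \<Rightarrow> bool list \<Rightarrow> bool" where
  "compatible \<sigma> \<tau> \<longleftrightarrow> prefix \<sigma> \<tau> \<or> prefix \<tau> \<sigma>"

text \<open>A Turing functional is a c.e. set of axioms (sigma, tau) ("on oracle extending sigma,
output extends tau") such that compatible oracle strings yield compatible outputs.\<close>
definition turing_functional :: "(bool list \<times> bool list) set \<Rightarrow> bool" where
  "turing_functional \<Phi> \<longleftrightarrow> ce (code_pair ` \<Phi>) \<and>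
     (\<forall>\<sigma> \<tau> \<sigma>' \<tau>'. (\<sigma>, \<tau>) \<in> \<Phi> \<and> (\<sigma>', \<tau>') \<in> \<Phi> \<and> compatible \<sigma> \<sigma>' \<longrightarrow> compatible \<tau> \<tau>')"

definition functional_output :: "(bool list \<times> bool list) set \<Rightarrow> (nat \<Rightarrow> bool) \<Rightarrow> (nat \<Rightarrow> bool) \<Rightarrow> bool" where
  "functional_output \<Phi> A X \<longleftrightarrow>
     (\<forall>\<sigma> \<tau>. (\<sigma>, \<tau>) \<in> \<Phi> \<and> prefix_of \<sigma> A \<longrightarrow> prefix_of \<tau> X) \<and>
     (\<forall>n. \<exists>\<sigma> \<tau>. (\<sigma>, \<tau>) \<in> \<Phi> \<and> prefix_of \<sigma> A \<and> n \<le> length \<tau>)"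

end

theory Submission
  imports Defs
begin

lemma prob_coin: "prob_space coin_space"
  unfolding coin_space_def by (intro prob_space_PiM) (simp add: prob_space_measure_pmf)

lemma space_coin: "space coin_space = UNIV"
  unfolding coin_space_def by (simp add: space_PiM)


lemma cyl_eq: "{A. init_seg A (length \<tau>) = \<tau>} =
   prod_emb UNIV (\<lambda>_. measure_pmf (bernoulli_pmf (1/2))) {..<length \<tau>} (Pi\<^sub>E {..<length \<tau>} (\<lambda>i. {\<tau>!i}))"
proof (intro equalityI subsetI)
  fix A assume "A \<in> {A. init_seg A (length \<tau>) = \<tau>}"
  then have eq: "map A [0..<length \<tau>] = \<tau>" unfolding init_seg_def by simp
  have "\<forall>i<length \<tau>. A i = \<tau> ! i"
  proof (intro allI impI)
    fix i assume i: "i < length \<tau>"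
    have "\<tau> ! i = map A [0..<length \<tau>] ! i" using eq by simp
    then show "A i = \<tau> ! i" using i by simp
  qed
  then show "A \<in> prod_emb UNIV (\<lambda>_. measure_pmf (bernoulli_pmf (1/2))) {..<length \<tau>} (Pi\<^sub>E {..<length \<tau>} (\<lambda>i. {\<tau>!i}))"
    unfolding prod_emb_def by (simp add: space_PiM PiE_iff)
next
  fix A assume "A \<in> prod_emb UNIV (\<lambda>_. measure_pmf (bernoulli_pmf (1/2))) {..<length \<tau>} (Pi\<^sub>E {..<length \<tau>} (\<lambda>i. {\<tau>!i}))"
  then have r: "restrict A {..<length \<tau>} \<in> Pi\<^sub>E {..<length \<tau>} (\<lambda>i. {\<tau>!i})"
    unfolding prod_emb_def by blast
  have "\<forall>i<length \<tau>. A i = \<tau> ! i"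
  proof (intro allI impI)
    fix i assume i: "i < length \<tau>"
    then have "restrict A {..<length \<tau>} i \<in> {\<tau>!i}" using PiE_mem[OF r] by blast
    then show "A i = \<tau> ! i" using i by simp
  qed
  then have "map A [0..<length \<tau>] = \<tau>" by (intro nth_equalityI) simp_all
  then show "A \<in> {A. init_seg A (length \<tau>) = \<tau>}" unfolding init_seg_def by simp
qed

lemma cyl_measure: "measure coin_space {A. init_seg A (length \<tau>) = \<tau>} = (1/2) ^ length \<tau>"
proof -
  have "emeasure coin_space {A. init_seg A (length \<tau>) = \<tau>} = (\<Prod>i\<in>{..<length \<tau>}. emeasure (measure_pmf (bernoulli_pmf (1/2))) {\<tau>!i})"
    unfolding cyl_eq coin_space_def
    by (intro emeasure_PiM_emb) (auto simp: prob_space_measure_pmf)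
  also have "\<dots> = (\<Prod>i\<in>{..<length \<tau>}. ennreal (1/2))"
    by (intro prod.cong) (simp_all add: emeasure_pmf_single)
  also have "\<dots> = ennreal ((1/2) ^ length \<tau>)"
    by (simp only: prod_constant card_lessThan ennreal_power[symmetric])
  finally have e: "emeasure coin_space {A. init_seg A (length \<tau>) = \<tau>} = ennreal ((1/2) ^ length \<tau>)" .
  have "(0::real) \<le> (1/2) ^ length \<tau>" by simp
  from measure_eq_emeasure_eq_ennreal[OF this e] show ?thesis .
qed


lemma cyl_sets: "{A. init_seg A (length \<tau>) = \<tau>} \<in> sets coin_space"
  unfolding cyl_eq coin_space_def by (rule sets_PiM_I) simp_all

definition lev :: "bool list set \<Rightarrow> nat \<Rightarrow> bool list set" where
  "lev T n = {\<tau>\<in>T. length \<tau> = n}"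

lemma finite_len: "finite {\<tau>::bool list. length \<tau> = n}"
  using finite_lists_length_eq[of "UNIV::bool set" n] by simp

lemma finite_lev: "finite (lev T n)"
  unfolding lev_def by (rule finite_subset[OF _ finite_len[of n]]) auto

lemma lev_union: "{A. init_seg A n \<in> T} = (\<Union>\<tau>\<in>lev T n. {A. init_seg A (length \<tau>) = \<tau>})"
  unfolding lev_def init_seg_def by auto

lemma lev_sets: "{A. init_seg A n \<in> T} \<in> sets coin_space"
  unfolding lev_union using cyl_sets finite_lev by (intro sets.finite_UN) auto

lemma lev_measure: "measure coin_space {A. init_seg A n \<in> T} = card (lev T n) / 2 ^ n"
proof -
  interpret prob_space coin_space by (rule prob_coin)
  have "measure coin_space {A. init_seg A n \<in> T} = (\<Sum>\<tau>\<in>lev T n. measure coin_space {A. init_seg A (length \<tau>) = \<tau>})"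
    unfolding lev_union
    by (intro measure_finite_Union finite_lev)
       (auto simp: cyl_sets disjoint_family_on_def lev_def)
  also have "\<dots> = (\<Sum>\<tau>\<in>lev T n. (1/2)^n)"
    by (intro sum.cong) (auto simp: cyl_measure lev_def)
  finally show ?thesis by (simp add: power_one_over)
qed

lemma paths_Inter: "paths T = (\<Inter>n. {A. init_seg A n \<in> T})"
  unfolding paths_def by auto

lemma init_seg_prefix: assumes mn: "m \<le> n" shows "prefix (init_seg A m) (init_seg A n)"
proof -
  have "[0..<n] = [0..<m] @ [m..<n]" using upt_add_eq_append[of 0 m "n-m"] mn by simp
  then show ?thesis by (simp add: init_seg_def)
qed

lemma tree_measure_lim:
  assumes "is_tree T"
  shows "(\<lambda>n. card (lev T n) / 2 ^ n) \<longlonglongrightarrow> tree_measure T"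
proof -
  interpret prob_space coin_space by (rule prob_coin)
  have "decseq (\<lambda>n. {A. init_seg A n \<in> T})"
  proof (intro decseq_SucI subsetI)
    fix n A assume "A \<in> {A. init_seg A (Suc n) \<in> T}"
    then show "A \<in> {A. init_seg A n \<in> T}"
      using assms init_seg_prefix[of n "Suc n" A] unfolding is_tree_def by auto
  qed
  then have "(\<lambda>n. measure coin_space {A. init_seg A n \<in> T}) \<longlonglongrightarrow> measure coin_space (\<Inter>n. {A. init_seg A n \<in> T})"
    by (intro finite_Lim_measure_decseq) (auto simp: lev_sets)
  then show ?thesis unfolding tree_measure_def paths_Inter lev_measure .
qed

lemma sub_tree: assumes "is_tree T" shows "is_tree {\<rho>. \<sigma> @ \<rho> \<in> T}"
  unfolding is_tree_def
proof (intro allI impI)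
  fix \<sigma>' \<tau> assume a: "\<sigma>' \<in> {\<rho>. \<sigma> @ \<rho> \<in> T} \<and> prefix \<tau> \<sigma>'"
  then have "prefix (\<sigma> @ \<tau>) (\<sigma> @ \<sigma>')" by simp
  with a assms show "\<tau> \<in> {\<rho>. \<sigma> @ \<rho> \<in> T}" unfolding is_tree_def by blast
qed

lemma card_lev_sub:
  "card (lev {\<rho>. \<sigma> @ \<rho> \<in> T} m) = card {\<tau>\<in>lev T (length \<sigma> + m). prefix \<sigma> \<tau>}"
proof -
  have im: "(\<lambda>\<rho>. \<sigma> @ \<rho>) ` lev {\<rho>. \<sigma> @ \<rho> \<in> T} m = {\<tau>\<in>lev T (length \<sigma> + m). prefix \<sigma> \<tau>}"
  proof (intro equalityI subsetI)
    fix \<tau> assume "\<tau> \<in> {\<tau>\<in>lev T (length \<sigma> + m). prefix \<sigma> \<tau>}"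
    then have t: "\<tau> \<in> T" "length \<tau> = length \<sigma> + m" "prefix \<sigma> \<tau>" by (simp_all add: lev_def)
    from t(3) obtain \<rho> where r: "\<tau> = \<sigma> @ \<rho>" by (rule prefixE)
    with t have "\<rho> \<in> lev {\<rho>. \<sigma> @ \<rho> \<in> T} m" by (simp add: lev_def)
    with r show "\<tau> \<in> (\<lambda>\<rho>. \<sigma> @ \<rho>) ` lev {\<rho>. \<sigma> @ \<rho> \<in> T} m" by blast
  next
    fix \<tau> assume "\<tau> \<in> (\<lambda>\<rho>. \<sigma> @ \<rho>) ` lev {\<rho>. \<sigma> @ \<rho> \<in> T} m"
    then obtain \<rho> where "\<tau> = \<sigma> @ \<rho>" "\<sigma> @ \<rho> \<in> T" "length \<rho> = m" by (auto simp: lev_def)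
    then show "\<tau> \<in> {\<tau>\<in>lev T (length \<sigma> + m). prefix \<sigma> \<tau>}" by (simp add: lev_def)
  qed
  have inj: "inj_on (\<lambda>\<rho>. \<sigma> @ \<rho>) (lev {\<rho>. \<sigma> @ \<rho> \<in> T} m)"
    by (simp add: inj_on_def)
  show ?thesis using card_image[OF inj] unfolding im by simp
qed
lemma card_lev_split:
  assumes "is_tree T"
  shows "(\<Sum>\<sigma>\<in>lev T n. card {\<tau>\<in>lev T (n + m). prefix \<sigma> \<tau>}) = card (lev T (n + m))"
proof -
  have eq: "lev T (n + m) = (\<Union>\<sigma>\<in>lev T n. {\<tau>\<in>lev T (n + m). prefix \<sigma> \<tau>})"
  proof (intro equalityI subsetI)
    fix \<tau> assume t: "\<tau> \<in> lev T (n + m)"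
    have pre: "prefix (take n \<tau>) \<tau>" by (rule take_is_prefix)
    have "take n \<tau> \<in> lev T n"
      using assms t pre unfolding lev_def is_tree_def by (simp add: min_def) blast
    with pre t show "\<tau> \<in> (\<Union>\<sigma>\<in>lev T n. {\<tau>\<in>lev T (n + m). prefix \<sigma> \<tau>})" by blast
  qed auto
  have disj: "\<sigma> = \<sigma>'" if hh: "\<sigma> \<in> lev T n" "\<sigma>' \<in> lev T n" "prefix \<sigma> \<tau>" "prefix \<sigma>' \<tau>" for \<sigma> \<sigma>' \<tau>
  proof -
    have "length \<sigma> = length \<sigma>'" using that by (simp add: lev_def)
    then have l1: "length \<sigma> \<le> length \<sigma>'" and l2: "length \<sigma>' \<le> length \<sigma>" by simp_all
    have a1: "prefix \<sigma> \<sigma>'" by (rule prefix_length_prefix[OF hh(3) hh(4) l1])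
    have a2: "prefix \<sigma>' \<sigma>" by (rule prefix_length_prefix[OF hh(4) hh(3) l2])
    show ?thesis by (rule prefix_order.antisym[OF a1 a2])
  qed
  have "card (\<Union>\<sigma>\<in>lev T n. {\<tau>\<in>lev T (n + m). prefix \<sigma> \<tau>}) = (\<Sum>\<sigma>\<in>lev T n. card {\<tau>\<in>lev T (n + m). prefix \<sigma> \<tau>})"
  proof (rule card_UN_disjoint[OF finite_lev])
    show "\<forall>\<sigma>\<in>lev T n. finite {\<tau>\<in>lev T (n + m). prefix \<sigma> \<tau>}"
      using finite_lev[of T "n+m"] by auto
    show "\<forall>\<sigma>\<in>lev T n. \<forall>\<sigma>'\<in>lev T n. \<sigma> \<noteq> \<sigma>' \<longrightarrow> {\<tau>\<in>lev T (n + m). prefix \<sigma> \<tau>} \<inter> {\<tau>\<in>lev T (n + m). prefix \<sigma>' \<tau>} = {}"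
      using disj by blast
  qed
  then have "card (lev T (n + m)) = (\<Sum>\<sigma>\<in>lev T n. card {\<tau>\<in>lev T (n + m). prefix \<sigma> \<tau>})"
    using eq by simp
  then show ?thesis by simp
qed

lemma exists_sigma:
  assumes tree: "is_tree T" and p: "tree_measure T = p" "0 < p" and q: "0 < q" "q < 1"
  shows "\<exists>\<sigma>. q \<le> tree_measure {\<rho>. \<sigma> @ \<rho> \<in> T}"
proof (rule ccontr)
  assume neg: "\<not> ?thesis"
  have lim: "(\<lambda>n. card (lev T n) / 2 ^ n) \<longlonglongrightarrow> p"
    using tree_measure_lim[OF tree] p by simp
  have "p < p / q" using p q by (simp add: less_divide_eq)
  then have "eventually (\<lambda>n. card (lev T n) / 2 ^ n < p / q) sequentially"
    using lim by (rule order_tendstoD(2)[rotated])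
  then obtain n where n: "card (lev T n) / 2 ^ n < p / q"
    by (auto simp: eventually_sequentially)
  define S where "S \<sigma> = {\<rho>. \<sigma> @ \<rho> \<in> T}" for \<sigma>
  have lim1: "(\<lambda>m. \<Sum>\<sigma>\<in>lev T n. card (lev (S \<sigma>) m) / 2 ^ m) \<longlonglongrightarrow> (\<Sum>\<sigma>\<in>lev T n. tree_measure (S \<sigma>))"
    unfolding S_def by (intro tendsto_sum tree_measure_lim sub_tree tree)
  have eqs: "(\<Sum>\<sigma>\<in>lev T n. card (lev (S \<sigma>) m) / 2 ^ m) = 2 ^ n * (card (lev T (n + m)) / 2 ^ (n + m))" for m
  proof -
    have "(\<Sum>\<sigma>\<in>lev T n. card (lev (S \<sigma>) m) / 2 ^ m) = (\<Sum>\<sigma>\<in>lev T n. real (card {\<tau>\<in>lev T (n + m). prefix \<sigma> \<tau>})) / 2 ^ m"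
      unfolding S_def sum_divide_distrib
    proof (intro sum.cong refl)
      fix \<sigma> assume "\<sigma> \<in> lev T n"
      then have "length \<sigma> = n" by (simp add: lev_def)
      then show "card (lev {\<rho>. \<sigma> @ \<rho> \<in> T} m) / 2 ^ m = real (card {\<tau>\<in>lev T (n + m). prefix \<sigma> \<tau>}) / 2 ^ m"
        by (simp only: card_lev_sub)
    qed
    also have "\<dots> = card (lev T (n + m)) / 2 ^ m"
      by (simp only: of_nat_sum[symmetric] card_lev_split[OF tree])
    also have "\<dots> = 2 ^ n * (card (lev T (n + m)) / 2 ^ (n + m))"
      by (simp add: power_add)
    finally show ?thesis .
  qed
  have "(\<lambda>m. card (lev T (m + n)) / 2 ^ (m + n)) \<longlonglongrightarrow> p"
    using LIMSEQ_ignore_initial_segment[OF lim, of n] .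
  then have "(\<lambda>m. 2 ^ n * (card (lev T (n + m)) / 2 ^ (n + m))) \<longlonglongrightarrow> 2 ^ n * p"
    by (intro tendsto_mult tendsto_const) (simp add: add.commute)
  with lim1 have sumeq: "(\<Sum>\<sigma>\<in>lev T n. tree_measure (S \<sigma>)) = 2 ^ n * p"
    unfolding eqs using LIMSEQ_unique by blast
  have "(\<Sum>\<sigma>\<in>lev T n. tree_measure (S \<sigma>)) \<le> (\<Sum>\<sigma>\<in>lev T n. q)"
    using neg unfolding S_def by (intro sum_mono) (simp add: not_le less_imp_le)
  then have "2 ^ n * p \<le> card (lev T n) * q" using sumeq by simp
  moreover have "card (lev T n) * q < 2 ^ n * p"
  proof -
    have "real (card (lev T n)) < p / q * 2 ^ n" using n by (simp add: pos_divide_less_eq)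
    then have "real (card (lev T n)) * q < p * 2 ^ n" using q(1) by (simp add: less_divide_eq)
    then show ?thesis by (simp add: mult.commute)
  qed
  ultimately show False by simp
qed

inductive_cases evZE: "eval Z xs y"
inductive_cases evScE: "eval Sc xs y"
inductive_cases evProjE: "eval (Proj i) xs y"
inductive_cases evCompE: "eval (Comp g fs) xs y"
inductive_cases evPrimE: "eval (Prim f g) xs y"
inductive_cases evMnE: "eval (Mn f) xs y"

lemma list_all2_det:
  "list_all2 (\<lambda>f y. eval f xs y \<and> (\<forall>y'. eval f xs y' \<longrightarrow> y = y')) fs ys \<Longrightarrow>
   list_all2 (\<lambda>f y. eval f xs y) fs ys' \<Longrightarrow> ys = ys'"
proof (induction fs arbitrary: ys ys')
  case Nil then show ?case using Nil.prems by auto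
next
  case (Cons f fs)
  from Cons.prems(1) obtain y ys0 where ys: "ys = y # ys0" "eval f xs y" "\<forall>y'. eval f xs y' \<longrightarrow> y = y'"
    "list_all2 (\<lambda>f y. eval f xs y \<and> (\<forall>y'. eval f xs y' \<longrightarrow> y = y')) fs ys0"
    unfolding list_all2_Cons1 by blast
  from Cons.prems(2) obtain y' ys1 where ys': "ys' = y' # ys1" "eval f xs y'"
    "list_all2 (\<lambda>f y. eval f xs y) fs ys1"
    unfolding list_all2_Cons1 by blast
  have "ys0 = ys1" using Cons.IH[OF ys(4) ys'(3)] .
  moreover have "y = y'" using ys(3) ys'(2) by blast
  ultimately show ?case using ys(1) ys'(1) by simp
qed

lemma eval_det: "eval f xs y \<Longrightarrow> eval f xs y' \<Longrightarrow> y = y'"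
proof (induction f xs y arbitrary: y' rule: eval.induct)
  case (eval_Z xs)
  then show ?case by (auto elim: evZE)
next
  case (eval_Sc x xs)
  then show ?case by (auto elim: evScE)
next
  case (eval_Proj i xs)
  then show ?case by (auto elim: evProjE)
next
  case (eval_Comp xs fs ys g z)
  from eval_Comp.prems obtain ys' where a: "list_all2 (\<lambda>f y. eval f xs y) fs ys'" "eval g ys' y'"
    by (auto elim: evCompE)
  have "ys = ys'" using list_all2_det[OF eval_Comp.IH(1) a(1)] .
  then show ?case using eval_Comp.IH(2) a(2) by blast
next
  case (eval_Prim0 f xs y g)
  from eval_Prim0.prems have "eval f xs y'" by (auto elim: evPrimE)
  then show ?case using eval_Prim0.IH by blast
next
  case (eval_PrimS f g n xs y z)
  from eval_PrimS.prems obtain y1 where "eval (Prim f g) (n # xs) y1" "eval g (y1 # n # xs) y'"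
    by (auto elim: evPrimE)
  then show ?case using eval_PrimS.IH by blast
next
  case (eval_Mn f n xs)
  from eval_Mn.prems have b: "eval f (y' # xs) 0" "\<forall>m<y'. \<exists>k. eval f (m # xs) (Suc k)"
    by (auto elim: evMnE)
  show ?case
  proof (rule ccontr)
    assume "n \<noteq> y'"
    then consider "n < y'" | "y' < n" by linarith
    then show False
    proof cases
      case 1
      then obtain k where "eval f (n # xs) (Suc k)" using b(2) by blast
      then show False using eval_Mn.IH(1) by fastforce
    next
      case 2
      then obtain k where "eval f (y' # xs) (Suc k)" "\<forall>y''. eval f (y' # xs) y'' \<longrightarrow> Suc k = y''"
        using eval_Mn.IH(2) by blast
      then show False using b(1) by fastforce
    qed
  qed
qed

lemma evZ: "y = 0 \<Longrightarrow> eval Z xs y" using eval_Z by simp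
lemma evSc: "y = Suc x \<Longrightarrow> eval Sc (x # xs) y" using eval_Sc by simp
lemma evProj: "i < length xs \<Longrightarrow> y = xs ! i \<Longrightarrow> eval (Proj i) xs y" using eval_Proj by simp
lemma comp1: "eval f xs a \<Longrightarrow> eval g [a] z \<Longrightarrow> eval (Comp g [f]) xs z"
  by (rule eval_Comp[where ys="[a]"]) simp_all
lemma comp2: "eval f1 xs a \<Longrightarrow> eval f2 xs b \<Longrightarrow> eval g [a, b] z \<Longrightarrow> eval (Comp g [f1, f2]) xs z"
  by (rule eval_Comp[where ys="[a, b]"]) simp_all
lemma primr: assumes "eval f xs (R 0)" "\<And>n. eval g (R n # n # xs) (R (Suc n))"
  shows "eval (Prim f g) (n # xs) (R n)"
proof (induction n)
  case 0 show ?case using assms(1) by (rule eval_Prim0)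
next
  case (Suc n) show ?case using Suc.IH assms(2) by (rule eval_PrimS)
qed

lemmas evP0 = evProj[where i=0]
lemmas evP1 = evProj[where i=1]
lemmas evP2 = evProj[where i=2]

definition "c1 = Comp Sc [Z]"
lemma ev_c1: "y = 1 \<Longrightarrow> eval c1 xs y"
  unfolding c1_def by (rule comp1[OF evZ[OF refl]]) (rule evSc, simp)

definition "addr = Prim (Proj 0) (Comp Sc [Proj 0])"
lemma ev_add0: "eval addr [a, b] (a + b)"
  unfolding addr_def
  apply (rule primr[where R="\<lambda>n. n + b"])
   apply (rule evP0; simp)
  apply (rule comp1[OF evP0 evSc]; simp)
  done
lemma ev_add: "y = a + b \<Longrightarrow> eval addr [a, b] y" using ev_add0 by simp

definition "predr = Prim Z (Proj 1)"
lemma ev_pred0: "eval predr [n] (n - 1)"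
  unfolding predr_def
  apply (rule primr[where R="\<lambda>n. n - 1"])
   apply (rule evZ; simp)
  apply (rule evP1; simp)
  done
lemma ev_pred: "y = n - 1 \<Longrightarrow> eval predr [n] y" using ev_pred0 by simp

definition "subr = Prim (Proj 0) (Comp predr [Proj 0])"
lemma ev_sub0: "eval subr [b, a] (a - b)"
  unfolding subr_def
  apply (rule primr[where R="\<lambda>n. a - n"])
   apply (rule evP0; simp)
  apply (rule comp1[OF evP0 ev_pred]; simp)
  apply arith
  done
lemma ev_sub: "y = a - b \<Longrightarrow> eval subr [b, a] y" using ev_sub0 by simp

definition "monusr = Comp subr [Proj 1, Proj 0]"
lemma ev_monus: "y = a - b \<Longrightarrow> eval monusr [a, b] y"
  unfolding monusr_def by (rule comp2[OF evP1 evP0 ev_sub]; simp)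

definition "trir = Prim Z (Comp addr [Proj 0, Comp Sc [Proj 1]])"
lemma ev_tri0: "eval trir [n] (triangle n)"
  unfolding trir_def
  apply (rule primr[where R="triangle"])
   apply (rule evZ; simp)
  apply (rule comp2[OF evP0 comp1[OF evP1 evSc] ev_add]; simp)
  apply arith
  done
lemma ev_tri: "y = triangle n \<Longrightarrow> eval trir [n] y" using ev_tri0 by simp

definition "pencr = Comp addr [Comp trir [addr], Proj 0]"
lemma ev_penc: "y = prod_encode (a, b) \<Longrightarrow> eval pencr [a, b] y"
  unfolding pencr_def
  by (rule comp2[OF comp1[OF ev_add ev_tri] evP0 ev_add]; simp add: prod_encode_def)

definition "consr = Comp Sc [pencr]"
lemma ev_cons: "y = Suc (prod_encode (a, b)) \<Longrightarrow> eval consr [a, b] y"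
  unfolding consr_def by (rule comp1[OF ev_penc evSc]; simp)

definition "mod2r = Prim Z (Comp monusr [c1, Proj 0])"
lemma ev_mod20: "eval mod2r [n] (n mod 2)"
  unfolding mod2r_def
  apply (rule primr[where R="\<lambda>n. n mod 2"])
   apply (rule evZ; simp)
  apply (rule comp2[OF ev_c1 evP0 ev_monus])
      apply (simp_all add: mod_Suc)
  apply arith
  done
lemma ev_mod2: "y = n mod 2 \<Longrightarrow> eval mod2r [n] y" using ev_mod20 by simp

definition "div2r = Prim Z (Comp addr [Proj 0, Comp mod2r [Proj 1]])"
lemma ev_div20: "eval div2r [n] (n div 2)"
  unfolding div2r_def
  apply (rule primr[where R="\<lambda>n. n div 2"])
   apply (rule evZ; simp)
  apply (rule comp2[OF evP0 comp1[OF evP1 ev_mod2] ev_add])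
        apply simp_all
  apply presburger
  done
lemma ev_div2: "y = n div 2 \<Longrightarrow> eval div2r [n] y" using ev_div20 by simp

definition "Hr = Prim (Proj 0) (Comp div2r [Proj 0])"
lemma ev_H0: "eval Hr [m, K] (K div 2 ^ m)"
  unfolding Hr_def
  apply (rule primr[where R="\<lambda>m. K div 2 ^ m"])
   apply (rule evP0; simp)
  apply (rule comp1[OF evP0 ev_div2])
    apply (simp_all add: power_Suc2 div_mult2_eq)
  apply (simp only: div_mult2_eq[symmetric] mult.commute)
  done
lemma ev_H: "y = K div 2 ^ m \<Longrightarrow> eval Hr [m, K] y" using ev_H0 by simp

definition "condr = Prim Z (Proj 2)"
lemma ev_cond0: "eval condr [c, a] (if c = 0 then 0 else a)"
  unfolding condr_def
  apply (rule primr[where R="\<lambda>c. if c = 0 then 0 else a"])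
   apply (rule evZ; simp)
  apply (rule evP2; simp)
  done
lemma ev_cond: "y = (if c = 0 then 0 else a) \<Longrightarrow> eval condr [c, a] y" using ev_cond0 by simp

fun Qf :: "nat \<Rightarrow> nat \<Rightarrow> nat" where
  "Qf 0 K = 0"
| "Qf (Suc j) K = (if K div 2 ^ (K - Suc j) - 1 = 0 then 0
     else Suc (prod_encode (K div 2 ^ (K - Suc j) mod 2, Qf j K)))"

definition "hexp = Comp Hr [Comp monusr [Proj 2, Comp Sc [Proj 1]], Proj 2]"
lemma ev_hexp: "y = K div 2 ^ (K - Suc j) \<Longrightarrow> eval hexp [q, j, K] y"
  unfolding hexp_def
  by (rule comp2[OF comp2[OF evP2 comp1[OF evP1 evSc] ev_monus] evP2 ev_H]; simp)

definition "Gq = Comp condr [Comp monusr [hexp, c1], Comp consr [Comp mod2r [hexp], Proj 0]]"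
lemma ev_Gq: "eval Gq [Qf j K, j, K] (Qf (Suc j) K)"
  unfolding Gq_def
  apply (rule comp2[OF comp2[OF ev_hexp ev_c1 ev_monus] comp2[OF comp1[OF ev_hexp ev_mod2] evP0 ev_cons] ev_cond])
  apply simp_all
  apply (cases "K div 2 ^ (K - Suc j) \<le> 1"; simp)
  done

definition "Qr = Prim Z Gq"
lemma ev_Q: "eval Qr [j, K] (Qf j K)"
  unfolding Qr_def
  apply (rule primr[where R="\<lambda>j. Qf j K"])
   apply (rule evZ; simp)
  apply (rule ev_Gq)
  done

lemma ev_Q': "y = Qf j K \<Longrightarrow> eval Qr [j, K] y" using ev_Q by simp

definition "Lr = Comp Qr [Comp Sc [Proj 0], Comp Sc [Proj 0]]"
lemma ev_L: "y = Qf (Suc k) (Suc k) \<Longrightarrow> eval Lr [k] y"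
  unfolding Lr_def
  apply (rule comp2[OF comp1[OF evP0 evSc] comp1[OF evP0 evSc] ev_Q'])
  apply (simp_all del: Qf.simps)
  done

primrec prer :: "bool list \<Rightarrow> recf" where
  "prer [] = Proj 0"
| "prer (b # \<sigma>) = Comp consr [(if b then c1 else Z), prer \<sigma>]"

primrec Pf :: "bool list \<Rightarrow> nat \<Rightarrow> nat" where
  "Pf [] c = c"
| "Pf (b # \<sigma>) c = Suc (prod_encode (of_bool b, Pf \<sigma> c))"

lemma ev_pre: "eval (prer \<sigma>) [c] (Pf \<sigma> c)"
proof (induction \<sigma>)
  case Nil then show ?case by (simp add: evP0)
next
  case (Cons b \<sigma>)
  have "eval (if b then c1 else Z) [c] (of_bool b)"
    by (cases b) (simp_all add: ev_c1 evZ)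
  then show ?case
    unfolding prer.simps Pf.simps by (rule comp2[OF _ Cons.IH ev_cons]) simp_all
qed

lemma ev_pre': "y = Pf \<sigma> c \<Longrightarrow> eval (prer \<sigma>) [c] y" using ev_pre by simp

definition "gr \<sigma> = Comp pencr [Lr, Comp (prer \<sigma>) [Lr]]"
definition "Gf \<sigma> k = prod_encode (Qf (Suc k) (Suc k), Pf \<sigma> (Qf (Suc k) (Suc k)))"
lemma ev_g: "y = Gf \<sigma> k \<Longrightarrow> eval (gr \<sigma>) [k] y"
  unfolding gr_def Gf_def
  by (rule comp2[OF ev_L comp1[OF ev_L ev_pre'] ev_penc]; simp)

definition "hr \<sigma> = Comp addr [Comp monusr [Comp (gr \<sigma>) [Proj 0], Proj 1], Comp monusr [Proj 1, Comp (gr \<sigma>) [Proj 0]]]"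
lemma ev_h: "eval (hr \<sigma>) [k, x] ((Gf \<sigma> k - x) + (x - Gf \<sigma> k))"
  unfolding hr_def
  by (rule comp2[OF comp2[OF comp1[OF evP0 ev_g] evP1 ev_monus] comp2[OF evP1 comp1[OF evP0 ev_g] ev_monus] ev_add]; simp)

lemma ce_range: "ce (range (Gf \<sigma>))"
  unfolding ce_def
proof (rule exI[where x="Mn (hr \<sigma>)"], intro allI iffI)
  fix x assume "x \<in> range (Gf \<sigma>)"
  then have ex: "\<exists>k. Gf \<sigma> k = x" by auto
  define n where "n = (LEAST k. Gf \<sigma> k = x)"
  have n: "Gf \<sigma> n = x" unfolding n_def using ex by (rule LeastI_ex)
  have lt: "Gf \<sigma> m \<noteq> x" if "m < n" for m
    using not_less_Least[OF that[unfolded n_def]] .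
  have "eval (Mn (hr \<sigma>)) [x] n"
  proof (rule eval_Mn)
    show "eval (hr \<sigma>) [n, x] 0" using ev_h[of \<sigma> n x] n by simp
    show "\<forall>m<n. \<exists>k. eval (hr \<sigma>) [m, x] (Suc k)"
    proof (intro allI impI)
      fix m assume "m < n"
      then have "Gf \<sigma> m \<noteq> x" by (rule lt)
      then have eq: "(Gf \<sigma> m - x) + (x - Gf \<sigma> m) = Suc ((Gf \<sigma> m - x) + (x - Gf \<sigma> m) - 1)" by arith
      have "eval (hr \<sigma>) [m, x] (Suc ((Gf \<sigma> m - x) + (x - Gf \<sigma> m) - 1))"
        using ev_h[of \<sigma> m x] by (simp only: eq[symmetric])
      then show "\<exists>k. eval (hr \<sigma>) [m, x] (Suc k)" by blast
    qed
  qed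
  then show "\<exists>y. eval (Mn (hr \<sigma>)) [x] y" by blast
next
  fix x assume "\<exists>y. eval (Mn (hr \<sigma>)) [x] y"
  then obtain y where "eval (Mn (hr \<sigma>)) [x] y" by blast
  then have "eval (hr \<sigma>) [y, x] 0" by (auto elim: evMnE)
  then have "(Gf \<sigma> y - x) + (x - Gf \<sigma> y) = 0" using eval_det[OF ev_h] by blast
  then have "Gf \<sigma> y = x" by arith
  then show "x \<in> range (Gf \<sigma>)" by blast
qed

fun lst :: "nat \<Rightarrow> bool list" where
  "lst K = (if K \<le> 1 then [] else odd K # lst (K div 2))"
declare lst.simps[simp del]

lemma lst_surj: "\<exists>K. 1 \<le> K \<and> lst K = \<tau>"
proof (induction \<tau>)
  case Nil
  have "lst 1 = []" by (simp add: lst.simps)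
  then show ?case by blast
next
  case (Cons b \<tau>)
  then obtain K' where K': "1 \<le> K'" "lst K' = \<tau>" by blast
  define K where "K = 2 * K' + of_bool b"
  have "\<not> K \<le> 1" using K'(1) unfolding K_def by simp
  then have "lst K = odd K # lst (K div 2)" by (simp add: lst.simps[of K])
  moreover have "odd K = b" unfolding K_def by (cases b) simp_all
  moreover have "K div 2 = K'" unfolding K_def by (cases b) simp_all
  ultimately have "lst K = b # \<tau>" using K'(2) by simp
  moreover have "1 \<le> K" using K'(1) unfolding K_def by simp
  ultimately show ?case by blast
qed

lemma code_str_Nil: "code_str [] = 0" by (simp add: code_str_def)
lemma code_str_Cons: "code_str (b # xs) = Suc (prod_encode (of_bool b, code_str xs))"
  by (simp add: code_str_def)

lemma Qf_lst: "j \<le> K \<Longrightarrow> Qf j K = code_str (lst (K div 2 ^ (K - j)))"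
proof (induction j)
  case 0
  have "K < 2 ^ K" by (rule less_exp)
  then have "K div 2 ^ K = 0" by simp
  then show ?case by (simp add: lst.simps[of 0] code_str_Nil)
next
  case (Suc j)
  define h where "h = K div 2 ^ (K - Suc j)"
  have kj: "K - j = Suc (K - Suc j)" using Suc.prems by simp
  have hd: "K div 2 ^ (K - j) = h div 2"
    unfolding h_def kj by (simp add: power_Suc2 div_mult2_eq) (simp only: div_mult2_eq[symmetric] mult.commute)
  have IH: "Qf j K = code_str (lst (h div 2))" using Suc.IH Suc.prems hd by simp
  show ?case
  proof (cases "h \<le> 1")
    case True
    then have "h - 1 = 0" by simp
    then have "Qf (Suc j) K = 0" unfolding h_def by simp
    moreover have "lst h = []" using True by (simp add: lst.simps[of h])
    ultimately show ?thesis unfolding h_def[symmetric] by (simp add: code_str_Nil)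
  next
    case False
    then have "h - 1 \<noteq> 0" by simp
    then have "Qf (Suc j) K = Suc (prod_encode (h mod 2, Qf j K))" unfolding h_def by simp
    moreover have "lst h = odd h # lst (h div 2)" using False by (simp add: lst.simps[of h])
    moreover have "of_bool (odd h) = h mod 2" by (simp add: mod_2_eq_odd)
    ultimately show ?thesis unfolding h_def[symmetric] IH by (simp add: code_str_Cons)
  qed
qed

lemma Pf_code: "Pf \<sigma> (code_str \<tau>) = code_str (\<sigma> @ \<tau>)"
  by (induction \<sigma>) (simp_all add: code_str_Cons)

lemma Gf_eq: "Gf \<sigma> k = code_pair (lst (Suc k), \<sigma> @ lst (Suc k))"
proof -
  have "Qf (Suc k) (Suc k) = code_str (lst (Suc k))" using Qf_lst[of "Suc k" "Suc k"] by simp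
  then show ?thesis unfolding Gf_def code_pair_def by (simp add: Pf_code)
qed

definition Phi :: "bool list \<Rightarrow> (bool list \<times> bool list) set" where
  "Phi \<sigma> = (\<lambda>\<tau>. (\<tau>, \<sigma> @ \<tau>)) ` UNIV"

lemma code_Phi: "code_pair ` Phi \<sigma> = range (Gf \<sigma>)"
proof (intro equalityI subsetI)
  fix x assume "x \<in> code_pair ` Phi \<sigma>"
  then obtain \<tau> where x: "x = code_pair (\<tau>, \<sigma> @ \<tau>)" unfolding Phi_def by blast
  obtain K where K: "1 \<le> K" "lst K = \<tau>" using lst_surj by blast
  then have "Gf \<sigma> (K - 1) = x" using Gf_eq[of \<sigma> "K - 1"] x by simp
  then show "x \<in> range (Gf \<sigma>)" by blast
next
  fix x assume "x \<in> range (Gf \<sigma>)"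
  then obtain k where "x = Gf \<sigma> k" by blast
  then show "x \<in> code_pair ` Phi \<sigma>" unfolding Gf_eq Phi_def by blast
qed

lemma tf_Phi: "turing_functional (Phi \<sigma>)"
  unfolding turing_functional_def
proof
  show "ce (code_pair ` Phi \<sigma>)" unfolding code_Phi by (rule ce_range)
  show "\<forall>\<sigma>1 \<tau>1 \<sigma>2 \<tau>2. (\<sigma>1, \<tau>1) \<in> Phi \<sigma> \<and> (\<sigma>2, \<tau>2) \<in> Phi \<sigma> \<and> compatible \<sigma>1 \<sigma>2 \<longrightarrow> compatible \<tau>1 \<tau>2"
    unfolding Phi_def compatible_def by auto
qed

lemma init_seg_len: "length (init_seg A n) = n" by (simp add: init_seg_def)

definition "ext \<sigma> A = (\<lambda>i. if i < length \<sigma> then \<sigma> ! i else A (i - length \<sigma>))"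

lemma init_seg_ext: "init_seg (ext \<sigma> A) (length \<sigma> + m) = \<sigma> @ init_seg A m"
proof (rule nth_equalityI)
  show "length (init_seg (ext \<sigma> A) (length \<sigma> + m)) = length (\<sigma> @ init_seg A m)"
    by (simp add: init_seg_len)
  fix i assume "i < length (init_seg (ext \<sigma> A) (length \<sigma> + m))"
  then have i: "i < length \<sigma> + m" by (simp add: init_seg_len)
  show "init_seg (ext \<sigma> A) (length \<sigma> + m) ! i = (\<sigma> @ init_seg A m) ! i"
  proof (cases "i < length \<sigma>")
    case True then show ?thesis using i by (simp add: init_seg_def ext_def nth_append)
  next
    case False then show ?thesis using i by (simp add: init_seg_def ext_def nth_append)
  qed
qed

lemma ext_path:
  assumes tree: "is_tree T" and A: "A \<in> paths {\<rho>. \<sigma> @ \<rho> \<in> T}"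
  shows "ext \<sigma> A \<in> paths T"
  unfolding paths_def
proof (rule CollectI, rule allI)
  fix N
  show "init_seg (ext \<sigma> A) N \<in> T"
  proof (cases "length \<sigma> \<le> N")
    case True
    then have "init_seg (ext \<sigma> A) N = \<sigma> @ init_seg A (N - length \<sigma>)"
      using init_seg_ext[of \<sigma> A "N - length \<sigma>"] by simp
    moreover have "\<sigma> @ init_seg A (N - length \<sigma>) \<in> T" using A unfolding paths_def by blast
    ultimately show ?thesis by simp
  next
    case False
    have "init_seg (ext \<sigma> A) (length \<sigma>) = \<sigma> @ init_seg A 0"
      using init_seg_ext[of \<sigma> A 0] by simp
    moreover have "\<sigma> @ init_seg A 0 \<in> T" using A unfolding paths_def by blast
    moreover have "prefix (init_seg (ext \<sigma> A) N) (init_seg (ext \<sigma> A) (length \<sigma>))"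
      using False by (intro init_seg_prefix) simp
    ultimately show ?thesis using tree unfolding is_tree_def by auto
  qed
qed

lemma fo_Phi: "functional_output (Phi \<sigma>) A (ext \<sigma> A)"
  unfolding functional_output_def
proof (intro conjI allI impI)
  fix \<tau>1 \<tau>2 assume a: "(\<tau>1, \<tau>2) \<in> Phi \<sigma> \<and> prefix_of \<tau>1 A"
  then have t2: "\<tau>2 = \<sigma> @ \<tau>1" unfolding Phi_def by blast
  have t1: "\<tau>1 = init_seg A (length \<tau>1)" using a unfolding prefix_of_def by blast
  have "init_seg (ext \<sigma> A) (length \<tau>2) = \<tau>2"
    using init_seg_ext[of \<sigma> A "length \<tau>1"] t1 t2 by simp
  then show "prefix_of \<tau>2 (ext \<sigma> A)" unfolding prefix_of_def by simp
next
  fix n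
  have "(init_seg A n, \<sigma> @ init_seg A n) \<in> Phi \<sigma>" unfolding Phi_def by blast
  moreover have "prefix_of (init_seg A n) A" unfolding prefix_of_def by (simp add: init_seg_len)
  moreover have "n \<le> length (\<sigma> @ init_seg A n)" by (simp add: init_seg_len)
  ultimately show "\<exists>\<sigma>' \<tau>. (\<sigma>', \<tau>) \<in> Phi \<sigma> \<and> prefix_of \<sigma>' A \<and> n \<le> length \<tau>" by blast
qed

theorem proposition4p4:
  fixes T :: "bool list set" and p q :: real
  assumes "is_tree T" and "tree_measure T = p" and "0 < p"
    and "q \<in> \<rat>" and "0 < q" and "q < 1"
  shows "\<exists>S \<Phi>. is_tree S \<and> q \<le> tree_measure S \<and> turing_functional \<Phi> \<and>
           (\<forall>A \<in> paths S. \<exists>X \<in> paths T. functional_output \<Phi> A X)"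
proof -
  obtain \<sigma> where s: "q \<le> tree_measure {\<rho>. \<sigma> @ \<rho> \<in> T}"
    using exists_sigma[OF assms(1,2,3,5,6)] by blast
  have "is_tree {\<rho>. \<sigma> @ \<rho> \<in> T}" by (rule sub_tree[OF assms(1)])
  moreover have "\<forall>A \<in> paths {\<rho>. \<sigma> @ \<rho> \<in> T}. \<exists>X \<in> paths T. functional_output (Phi \<sigma>) A X"
    using ext_path[OF assms(1)] fo_Phi by blast
  ultimately show ?thesis using s tf_Phi by blast
qed

end
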